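(* Fix integers $d,p,K,T\ge 1$, integers $n_1,\dots,n_T\ge 1$, covariate vectors $X^{(1)},\dots,X^{(T)}\in\mathbb{R}^p$, and data points $y_i^{(t)}\in\mathbb{R}^d$ ($t=1,\dots,T$, $i=1,\dots,n_t$). Let $N=\sum_{t=1}^T n_t$. Fix $\lambda_\alpha,\lambda_\beta\ge 0$ and $r>0$, and let $$g(\alpha,\beta)=\lambda_\alpha\sum_{k=1}^K\|\alpha_k\|_1+\lambda_\beta\sum_{k=1}^K\|\beta_k\|_1+\sum_{k=1}^K\sum_{t=1}^T \iota\{\|\beta_k^TX^{(t)}\|_2\le r\},$$ where $\iota\{A\}=0$ if $A$ holds and $+\infty$ otherwise. For a parameter $\theta=(\alpha,\beta,\Sigma)$ define $$\log\mathcal{L}(\theta)=\sum_{t=1}^T\sum_{i=1}^{n_t}\log\Big(\sum_{k=1}^K\pi_{kt}(\alpha)\,\phi\big(y_i^{(t)};\mu_{kt}(\beta),\Sigma_k\big)\Big).$$ Assume: (1) the parameter space $\Theta$ of $\theta=(\alpha,\beta,\Sigma)$ is compact, and there is a constant $c>0$ such that $\lambda_{\min}(\Sigma_k)\ge c$ for every $\theta\in\Theta$ and every $k=1,\dots,K$; (2) all data points lie in a compact set $\mathcal{Y}\subset\mathbb{R}^d$ with $\max_{y,y'\in\mathcal{Y}}\|y-y'\|_\infty\le R$ for some constant $0<R<\infty$; (3) $\log\mathcal{L}(\theta)<\infty$ for all $\theta\in\Theta$. Let $Q$ be a closed axis-aligned cube in $\mathbb{R}^d$ of side length $R$ containing $\mathcal{Y}$.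 For each positive integer $D$, let $B=D^d$ and partition $Q$ into $B$ congruent (half-open, so disjoint) axis-aligned subcubes $E_1,\dots,E_B$ of side length $R/D$ with centers $\tilde y_1,\dots,\tilde y_B$; let $C_b^{(t)}=\#\{i\in\{1,\dots,n_t\}: y_i^{(t)}\in E_b\}$ and define the binned log-likelihood $$\ell_B(\theta)=\sum_{t=1}^T\sum_{b=1}^B C_b^{(t)}\log\Big(\sum_{k=1}^K\pi_{kt}(\alpha)\,\phi\big(\tilde y_b;\mu_{kt}(\beta),\Sigma_k\big)\Big).$$ Let $\tilde\Theta_B=\operatorname{argmin}_{\theta\in\Theta}\big(-\tfrac1N\ell_B(\theta)+g(\alpha,\beta)\big)$ and $\hat\Theta=\operatorname{argmin}_{\theta\in\Theta}\big(-\tfrac1N\log\mathcal{L}(\theta)+g(\alpha,\beta)\big)$. Then for any sequence $\tilde\theta_B\in\tilde\Theta_B$ (indexed by $B=D^d$, $D=1,2,\dots$), there exists a subsequence $\tilde\theta_{s_B}$ that converges, and its limit lies in $\hat\Theta$: $\lim_{B\to\infty}\tilde\theta_{s_B}\in\hat\Theta$.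
   Context: Model: $\alpha=\{\alpha_{0k}\in\mathbb{R},\alpha_k\in\mathbb{R}^p\}_{k=1}^K$, $\beta=\{\beta_{0k}\in\mathbb{R}^d,\beta_k\in\mathbb{R}^{p\times d}\}_{k=1}^K$, $\Sigma=\{\Sigma_k\}_{k=1}^K$ with each $\Sigma_k$ a $d\times d$ symmetric positive definite matrix. Cluster means and probabilities are $\mu_{kt}(\beta)=\beta_{0k}+\beta_k^TX^{(t)}\in\mathbb{R}^d$ and $\pi_{kt}(\alpha)=\exp(\alpha_{0k}+X^{(t)T}\alpha_k)/\sum_{l=1}^K\exp(\alpha_{0l}+X^{(t)T}\alpha_l)$. $\phi(\cdot;\mu,\Sigma)$ denotes the $d$-variate Gaussian density with mean $\mu$ and covariance $\Sigma$. $\lambda_{\min}$ denotes the smallest eigenvalue. The binned likelihood equals the original likelihood with each data point replaced by the center of the bin containing it. *)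

theory Defs
  imports "HOL-Analysis.Analysis"
begin

text \<open>Parameters theta = (alpha0, alpha, beta0, beta, Sigma); clusters indexed by a finite type 'k,
  covariates in real^'p, data in real^'d. beta_k is a p x d matrix, i.e. of type (real^'d)^'p.\<close>

type_synonym ('k,'p,'d) param =
  "(real^'k) \<times> ((real^'p)^'k) \<times> ((real^'d)^'k) \<times> (((real^'d)^'p)^'k) \<times> (((real^'d)^'d)^'k)"

definition alpha0 :: "('k::finite,'p::finite,'d::finite) param \<Rightarrow> real^'k" where
  "alpha0 \<theta> = fst \<theta>"
definition alpha :: "('k::finite,'p::finite,'d::finite) param \<Rightarrow> (real^'p)^'k" where
  "alpha \<theta> = fst (snd \<theta>)"
definition beta0 :: "('k::finite,'p::finite,'d::finite) param \<Rightarrow> (real^'d)^'k" where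
  "beta0 \<theta> = fst (snd (snd \<theta>))"
definition beta :: "('k::finite,'p::finite,'d::finite) param \<Rightarrow> ((real^'d)^'p)^'k" where
  "beta \<theta> = fst (snd (snd (snd \<theta>)))"
definition Sig :: "('k::finite,'p::finite,'d::finite) param \<Rightarrow> ((real^'d)^'d)^'k" where
  "Sig \<theta> = snd (snd (snd (snd \<theta>)))"

definition lambda_min :: "real^'n^'n \<Rightarrow> real" where
  "lambda_min A = Inf {l. \<exists>v. v \<noteq> 0 \<and> A *v v = l *\<^sub>R v}"

definition symmetric_matrix :: "real^'n^'n \<Rightarrow> bool" where
  "symmetric_matrix A \<longleftrightarrow> transpose A = A"

definition pos_def_matrix :: "real^'n^'n \<Rightarrow> bool" where
  "pos_def_matrix A \<longleftrightarrow> symmetric_matrix A \<and> (\<forall>x. x \<noteq> 0 \<longrightarrow> x \<bullet> (A *v x) > 0)"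

definition gauss_pdf :: "real^'d \<Rightarrow> real^'d \<Rightarrow> real^'d^'d \<Rightarrow> real" where
  "gauss_pdf y \<mu> S =
     (2 * pi) powr (- real CARD('d) / 2) * (det S) powr (- 1 / 2) *
     exp (- (1 / 2) * ((y - \<mu>) \<bullet> (matrix_inv S *v (y - \<mu>))))"

definition mu_kt :: "('k::finite,'p::finite,'d::finite) param \<Rightarrow> 'k \<Rightarrow> real^'p \<Rightarrow> real^'d" where
  "mu_kt \<theta> k X = beta0 \<theta> $ k + (X v* (beta \<theta> $ k))"

definition pi_kt :: "('k::finite,'p::finite,'d::finite) param \<Rightarrow> 'k \<Rightarrow> real^'p \<Rightarrow> real" where
  "pi_kt \<theta> k X = exp (alpha0 \<theta> $ k + X \<bullet> (alpha \<theta> $ k)) /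
      (\<Sum>l\<in>UNIV. exp (alpha0 \<theta> $ l + X \<bullet> (alpha \<theta> $ l)))"

definition mix_density :: "('k::finite,'p::finite,'d::finite) param \<Rightarrow> real^'p \<Rightarrow> real^'d \<Rightarrow> real" where
  "mix_density \<theta> X y = (\<Sum>k\<in>UNIV. pi_kt \<theta> k X * gauss_pdf y (mu_kt \<theta> k X) (Sig \<theta> $ k))"

definition log_lik ::
  "nat \<Rightarrow> (nat \<Rightarrow> nat) \<Rightarrow> (nat \<Rightarrow> real^'p) \<Rightarrow> (nat \<Rightarrow> nat \<Rightarrow> real^'d)
     \<Rightarrow> ('k::finite,'p::finite,'d::finite) param \<Rightarrow> real" where
  "log_lik T n X y \<theta> = (\<Sum>t<T. \<Sum>i<n t. ln (mix_density \<theta> (X t) (y t i)))"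

definition l1norm :: "real^'n \<Rightarrow> real" where
  "l1norm x = (\<Sum>i\<in>UNIV. \<bar>x $ i\<bar>)"

definition l1norm_mat :: "real^'m^'n \<Rightarrow> real" where
  "l1norm_mat B = (\<Sum>i\<in>UNIV. \<Sum>j\<in>UNIV. \<bar>B $ i $ j\<bar>)"

definition linf_norm :: "real^'n \<Rightarrow> real" where
  "linf_norm x = Max (range (\<lambda>i. \<bar>x $ i\<bar>))"

definition penalty ::
  "real \<Rightarrow> real \<Rightarrow> real \<Rightarrow> nat \<Rightarrow> (nat \<Rightarrow> real^'p)
     \<Rightarrow> ('k::finite,'p::finite,'d::finite) param \<Rightarrow> ereal" where
  "penalty la lb r T X \<theta> =
     ereal (la * (\<Sum>k\<in>UNIV. l1norm (alpha \<theta> $ k)) + lb * (\<Sum>k\<in>UNIV. l1norm_mat (beta \<theta> $ k)))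
     + (\<Sum>k\<in>UNIV. \<Sum>t<T. (if norm (X t v* (beta \<theta> $ k)) \<le> r then 0 else \<infinity>))"

definition argmin_on :: "'a set \<Rightarrow> ('a \<Rightarrow> ereal) \<Rightarrow> 'a set" where
  "argmin_on \<Theta> F = {\<theta>\<in>\<Theta>. \<forall>\<theta>'\<in>\<Theta>. F \<theta> \<le> F \<theta>'}"

text \<open>Binning of the cube Q = prod_i [a_i, a_i + R] into D^d subcubes of side R/D. A point belongs to the
  half-open subcube [a_i + b_i R/D, a_i + (b_i+1) R/D) in each coordinate; points on the
  upper face of Q are assigned to the last subcube in that coordinate.\<close>
definition bins :: "nat \<Rightarrow> ('d::finite \<Rightarrow> nat) set" where
  "bins D = {b. \<forall>i. b i < D}"

definition bin_of :: "real^'d \<Rightarrow> real \<Rightarrow> nat \<Rightarrow> real^'d \<Rightarrow> ('d::finite \<Rightarrow> nat)" where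
  "bin_of a R D x = (\<lambda>i. min (D - 1) (nat \<lfloor>(x $ i - a $ i) * real D / R\<rfloor>))"

definition bin_center :: "real^'d \<Rightarrow> real \<Rightarrow> nat \<Rightarrow> ('d::finite \<Rightarrow> nat) \<Rightarrow> real^'d" where
  "bin_center a R D b = (\<chi> i. a $ i + (real (b i) + 1 / 2) * R / real D)"

definition bin_count ::
  "real^'d \<Rightarrow> real \<Rightarrow> nat \<Rightarrow> (nat \<Rightarrow> nat) \<Rightarrow> (nat \<Rightarrow> nat \<Rightarrow> real^'d) \<Rightarrow> nat \<Rightarrow> ('d::finite \<Rightarrow> nat) \<Rightarrow> nat" where
  "bin_count a R D n y t b = card {i. i < n t \<and> bin_of a R D (y t i) = b}"

definition binned_log_lik ::
  "real^'d \<Rightarrow> real \<Rightarrow> nat \<Rightarrow> nat \<Rightarrow> (nat \<Rightarrow> nat) \<Rightarrow> (nat \<Rightarrow> real^'p) \<Rightarrow> (nat \<Rightarrow> nat \<Rightarrow> real^'d)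
     \<Rightarrow> ('k::finite,'p::finite,'d::finite) param \<Rightarrow> real" where
  "binned_log_lik a R D T n X y \<theta> =
     (\<Sum>t<T. \<Sum>b\<in>bins D. real (bin_count a R D n y t b) * ln (mix_density \<theta> (X t) (bin_center a R D b)))"

end

theory Submission
  imports Defs
begin

definition qf :: "real^'d^'d \<Rightarrow> real^'d \<Rightarrow> real" where
  "qf S v = v \<bullet> (\<chi> k. det (\<chi> i j. if j = k then v$i else S$i$j) / det S)"

lemma inv_cramer:
  fixes S :: "real^'d^'d"
  assumes "det S \<noteq> 0"
  shows "matrix_inv S *v v = (\<chi> k. det (\<chi> i j. if j = k then v$i else S$i$j) / det S)"
proof -
  have "invertible S" using assms invertible_det_nz by blast
  then have "\<exists>A'. S ** A' = mat 1 \<and> A' ** S = mat 1" unfolding invertible_def .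
  then have "S ** matrix_inv S = mat 1" unfolding matrix_inv_def by (rule someI_ex[THEN conjunct1])
  then have "S *v (matrix_inv S *v v) = v" by (simp add: matrix_vector_mul_assoc)
  then show ?thesis using cramer[OF assms] by blast
qed

lemma gauss_alt:
  fixes S :: "real^'d^'d"
  assumes "det S \<noteq> 0"
  shows "gauss_pdf y \<mu> S = (2 * pi) powr (- real CARD('d) / 2) * (det S) powr (- 1 / 2) *
     exp (- (1 / 2) * qf S (y - \<mu>))"
  unfolding gauss_pdf_def qf_def inv_cramer[OF assms] ..

lemma tendsto_det:
  fixes A :: "'a \<Rightarrow> real^'n^'n"
  assumes "(A \<longlongrightarrow> B) F"
  shows "((\<lambda>x. det (A x)) \<longlongrightarrow> det B) F"
  unfolding det_def by (intro tendsto_intros assms)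

lemma tendsto_qf:
  fixes S :: "'a \<Rightarrow> real^'n^'n"
  assumes "(S \<longlongrightarrow> S0) F" "(v \<longlongrightarrow> v0) F" "det S0 \<noteq> 0"
  shows "((\<lambda>x. qf (S x) (v x)) \<longlongrightarrow> qf S0 v0) F"
proof -
  have m: "((\<lambda>x. (\<chi> i j. if j = k then v x $i else S x $i$j)) \<longlongrightarrow> (\<chi> i j. if j = k then v0$i else S0$i$j)) F" for k
    apply (intro tendsto_vec_lambda)
    subgoal for i j by (cases "j = k") (auto intro!: tendsto_intros assms)
    done
  show ?thesis unfolding qf_def
    by (intro tendsto_intros tendsto_det m assms)
qed

definition gauss' :: "real^'d \<Rightarrow> real^'d \<Rightarrow> real^'d^'d \<Rightarrow> real" where
  "gauss' y \<mu> S = (2 * pi) powr (- real CARD('d) / 2) * (det S) powr (- 1 / 2) *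
     exp (- (1 / 2) * qf S (y - \<mu>))"

definition mix' :: "('k::finite,'p::finite,'d::finite) param \<Rightarrow> real^'p \<Rightarrow> real^'d \<Rightarrow> real" where
  "mix' \<theta> X y = (\<Sum>k\<in>UNIV. pi_kt \<theta> k X * gauss' y (mu_kt \<theta> k X) (Sig \<theta> $ k))"

lemma gauss_eq: "det S \<noteq> 0 \<Longrightarrow> gauss_pdf y \<mu> S = gauss' y \<mu> S"
  unfolding gauss'_def by (rule gauss_alt)

lemma mix_eq: "\<forall>k. det (Sig \<theta> $ k) \<noteq> 0 \<Longrightarrow> mix_density \<theta> X y = mix' \<theta> X y"
  unfolding mix_density_def mix'_def by (intro sum.cong refl arg_cong2[where f="(*)"] gauss_eq) auto

lemma pi_pos: "pi_kt \<theta> k X > 0"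
  unfolding pi_kt_def by (intro divide_pos_pos sum_pos) auto

lemma mix'_pos: "\<forall>k. det (Sig \<theta> $ k) \<noteq> 0 \<Longrightarrow> mix' \<theta> X y > 0"
  unfolding mix'_def gauss'_def
  by (intro sum_pos mult_pos_pos pi_pos) auto

lemma tendsto_pi:
  fixes f :: "'a \<Rightarrow> ('k::finite,'p::finite,'d::finite) param"
  assumes "(f \<longlongrightarrow> L) F"
  shows "((\<lambda>x. pi_kt (f x) k X) \<longlongrightarrow> pi_kt L k X) F"
proof -
  have "(\<Sum>l\<in>UNIV. exp (alpha0 L $ l + X \<bullet> (alpha L $ l))) \<noteq> 0"
    by (metis (no_types, lifting) UNIV_not_empty exp_gt_zero finite_class.finite_UNIV less_irrefl sum_pos)
  then show ?thesis unfolding pi_kt_def alpha0_def alpha_def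
    by (intro tendsto_intros assms) auto
qed

lemma tendsto_mu:
  fixes f :: "'a \<Rightarrow> ('k::finite,'p::finite,'d::finite) param"
  assumes "(f \<longlongrightarrow> L) F"
  shows "((\<lambda>x. mu_kt (f x) k X) \<longlongrightarrow> mu_kt L k X) F"
  unfolding mu_kt_def beta0_def beta_def vector_matrix_mult_def
  by (intro tendsto_intros assms)

lemma tendsto_Sig:
  fixes f :: "'a \<Rightarrow> ('k::finite,'p::finite,'d::finite) param"
  assumes "(f \<longlongrightarrow> L) F"
  shows "((\<lambda>x. Sig (f x)) \<longlongrightarrow> Sig L) F"
  unfolding Sig_def by (intro tendsto_intros assms)

lemma G_tendsto:
  fixes f :: "'a \<Rightarrow> ('k::finite,'p::finite,'d::finite) param"
  assumes "(f \<longlongrightarrow> L) F" "(g \<longlongrightarrow> yy) F" "\<forall>k. det (Sig L $ k) \<noteq> 0"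
    "eventually (\<lambda>x. \<forall>k. det (Sig (f x) $ k) \<noteq> 0) F"
  shows "((\<lambda>x. ln (mix_density (f x) X (g x))) \<longlongrightarrow> ln (mix_density L X yy)) F"
proof -
  have "((\<lambda>x. ln (mix' (f x) X (g x))) \<longlongrightarrow> ln (mix' L X yy)) F"
    unfolding mix'_def gauss'_def
    apply (intro tendsto_intros tendsto_pi tendsto_mu tendsto_Sig tendsto_det tendsto_qf assms)
    using assms(3) mix'_pos[OF assms(3), of X yy] by (auto simp: mix'_def gauss'_def)
  moreover have "eventually (\<lambda>x. ln (mix' (f x) X (g x)) = ln (mix_density (f x) X (g x))) F"
    using assms(4) by eventually_elim (simp add: mix_eq)
  ultimately show ?thesis using mix_eq[OF assms(3)] by (simp add: tendsto_cong)
qed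


lemma pd_det:
  fixes S :: "real^'n^'n"
  assumes "pos_def_matrix S" shows "det S \<noteq> 0"
proof
  assume "det S = 0"
  then have "\<not> inj (\<lambda>x. S *v x)"
    using det_nz_iff_inj[of "\<lambda>x. S *v x"] by simp
  then obtain x y where "x \<noteq> y" "S *v x = S *v y" unfolding inj_def by blast
  then have "x - y \<noteq> 0" "S *v (x - y) = 0" by (auto simp: matrix_vector_mult_diff_distrib)
  moreover have "0 < (x - y) \<bullet> (S *v (x - y))" using assms calculation(1) unfolding pos_def_matrix_def by blast
  ultimately show False by simp
qed

lemma sum_count:
  fixes h :: "'b \<Rightarrow> real"
  assumes "finite A" "finite B" "\<forall>i\<in>A. g i \<in> B"
  shows "(\<Sum>b\<in>B. real (card {i\<in>A. g i = b}) * h b) = (\<Sum>i\<in>A. h (g i))"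
proof -
  have "(\<Sum>i\<in>A. h (g i)) = (\<Sum>b\<in>B. \<Sum>i\<in>{i\<in>A. g i = b}. h (g i))"
  proof -
    have sub: "g ` A \<subseteq> B" using assms(3) by auto
    show ?thesis using sum.group[OF assms(1,2) sub, of "\<lambda>i. h (g i)"] by simp
  qed
  also have "\<dots> = (\<Sum>b\<in>B. real (card {i\<in>A. g i = b}) * h b)"
    by (intro sum.cong refl) auto
  finally show ?thesis by simp
qed

lemma bins_finite: "finite (bins D :: ('d::finite \<Rightarrow> nat) set)"
proof -
  have "bins D = (PiE UNIV (\<lambda>_::'d. {..<D}))"
    unfolding bins_def by (auto simp: PiE_def Pi_def)
  then show ?thesis by (simp add: finite_PiE)
qed

lemma bin_of_in: "D \<ge> 1 \<Longrightarrow> bin_of a R D x \<in> bins D"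
  unfolding bins_def bin_of_def by auto

lemma binned_alt:
  assumes "D \<ge> 1"
  shows "binned_log_lik a R D T n X y \<theta> =
    (\<Sum>t<T. \<Sum>i<n t. ln (mix_density \<theta> (X t) (bin_center a R D (bin_of a R D (y t i)))))"
  unfolding binned_log_lik_def bin_count_def
proof (intro sum.cong refl)
  fix t
  have e: "{i. i < n t \<and> bin_of a R D (y t i) = b} = {i\<in>{..<n t}. bin_of a R D (y t i) = b}" for b
    by auto
  show "(\<Sum>b\<in>bins D. real (card {i. i < n t \<and> bin_of a R D (y t i) = b}) *
          ln (mix_density \<theta> (X t) (bin_center a R D b))) =
        (\<Sum>i<n t. ln (mix_density \<theta> (X t) (bin_center a R D (bin_of a R D (y t i)))))"
    unfolding e
    by (rule sum_count[where h="\<lambda>b. ln (mix_density \<theta> (X t) (bin_center a R D b))"])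
       (auto simp: bins_finite intro: bin_of_in[OF assms])
qed

lemma center_close:
  fixes x a :: "real^'d::finite"
  assumes "D \<ge> 1" "R > 0" "a$i \<le> x$i" "x$i \<le> a$i + R"
  shows "\<bar>bin_center a R D (bin_of a R D x) $ i - x$i\<bar> \<le> R / real D"
proof -
  define z where "z = (x $ i - a $ i) * real D / R"
  have z0: "0 \<le> z" using assms unfolding z_def by auto
  have "(x $ i - a $ i) * real D \<le> R * real D" using assms by (intro mult_right_mono) auto
  then have zD: "z \<le> real D" using assms unfolding z_def by (simp add: divide_le_eq)
  define m where "m = min (D - 1) (nat \<lfloor>z\<rfloor>)"
  have m: "\<bar>real m + 1/2 - z\<bar> \<le> 1"
  proof (cases "nat \<lfloor>z\<rfloor> \<le> D - 1")
    case True
    then have "m = nat \<lfloor>z\<rfloor>" unfolding m_def by simp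
    then have "real m = of_int \<lfloor>z\<rfloor>" using z0 by simp
    then show ?thesis by linarith
  next
    case False
    then have "m = D - 1" unfolding m_def by simp
    moreover have "\<lfloor>z\<rfloor> \<ge> int D" using False by linarith
    ultimately show ?thesis using zD assms(1) by (simp add: of_nat_diff) linarith
  qed
  have "bin_center a R D (bin_of a R D x) $ i - x$i = (real m + 1/2 - z) * (R / real D)"
    unfolding bin_center_def bin_of_def m_def z_def using assms by (simp add: field_simps)
  then have "\<bar>bin_center a R D (bin_of a R D x) $ i - x$i\<bar> = \<bar>real m + 1/2 - z\<bar> * (R / real D)"
    using assms by (simp add: abs_mult)
  also have "\<dots> \<le> 1 * (R / real D)" using m assms by (intro mult_right_mono) auto
  finally show ?thesis by simp
qed

lemma center_lim:
  fixes x a :: "real^'d::finite"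
  assumes "R > 0" "\<forall>i. a$i \<le> x$i \<and> x$i \<le> a$i + R"
  shows "(\<lambda>D. bin_center a R D (bin_of a R D x)) \<longlonglongrightarrow> x"
proof -
  have ev: "eventually (\<lambda>D. norm (bin_center a R D (bin_of a R D x) - x) \<le> real CARD('d) * R / real D) sequentially"
    using eventually_ge_at_top[of "1::nat"]
  proof eventually_elim
    case (elim D)
    have "norm (bin_center a R D (bin_of a R D x) - x) \<le> (\<Sum>i\<in>UNIV. \<bar>(bin_center a R D (bin_of a R D x) - x) $ i\<bar>)"
      by (rule norm_le_l1_cart)
    also have "\<dots> \<le> (\<Sum>i\<in>(UNIV::'d set). R / real D)"
      using center_close[OF elim assms(1)] assms(2) by (intro sum_mono) auto
    finally show ?case by simp
  qed
  have "(\<lambda>D. real CARD('d) * R / real D) \<longlonglongrightarrow> 0"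
    by (intro tendsto_divide_0[OF tendsto_const] filterlim_at_top_imp_at_infinity filterlim_real_sequentially)
  then have "(\<lambda>D. bin_center a R D (bin_of a R D x) - x) \<longlonglongrightarrow> 0"
    by (rule Lim_null_comparison[OF ev])
  then show ?thesis by (simp add: LIM_zero_iff)
qed


definition Pf :: "real \<Rightarrow> real \<Rightarrow> ('k::finite,'p::finite,'d::finite) param \<Rightarrow> real" where
  "Pf la lb \<theta> = la * (\<Sum>k\<in>UNIV. l1norm (alpha \<theta> $ k)) + lb * (\<Sum>k\<in>UNIV. l1norm_mat (beta \<theta> $ k))"

definition okp :: "real \<Rightarrow> nat \<Rightarrow> (nat \<Rightarrow> real^'p) \<Rightarrow> ('k::finite,'p::finite,'d::finite) param \<Rightarrow> bool" where
  "okp r T X \<theta> = (\<forall>k. \<forall>t<T. norm (X t v* (beta \<theta> $ k)) \<le> r)"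

lemma pen_eq: "penalty la lb r T X \<theta> = (if okp r T X \<theta> then ereal (Pf la lb \<theta>) else \<infinity>)"
proof (cases "okp r T X \<theta>")
  case True
  then show ?thesis unfolding penalty_def Pf_def okp_def by simp
next
  case False
  then obtain k t where kt: "t < T" "\<not> norm (X t v* (beta \<theta> $ k)) \<le> r" unfolding okp_def by auto
  have "(\<Sum>k\<in>UNIV. \<Sum>t<T. (if norm (X t v* (beta \<theta> $ k)) \<le> r then 0 else \<infinity>)) = (\<infinity>::ereal)"
    unfolding sum_Pinfty using kt by (auto intro!: bexI[of _ k] bexI[of _ t])
  then show ?thesis using False unfolding penalty_def by simp
qed

lemma tendsto_Pf:
  fixes f :: "'a \<Rightarrow> ('k::finite,'p::finite,'d::finite) param"
  assumes "(f \<longlongrightarrow> L) F"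
  shows "((\<lambda>x. Pf la lb (f x)) \<longlongrightarrow> Pf la lb L) F"
  unfolding Pf_def l1norm_def l1norm_mat_def alpha_def beta_def
  by (intro tendsto_intros assms)

lemma tendsto_bnorm:
  fixes f :: "'a \<Rightarrow> ('k::finite,'p::finite,'d::finite) param"
  assumes "(f \<longlongrightarrow> L) F"
  shows "((\<lambda>x. norm (Z v* (beta (f x) $ k))) \<longlongrightarrow> norm (Z v* (beta L $ k))) F"
  unfolding vector_matrix_mult_def beta_def
  by (intro tendsto_intros assms)

theorem proposition1:
  fixes T :: nat and n :: "nat \<Rightarrow> nat"
    and X :: "nat \<Rightarrow> real^'p::finite"
    and y :: "nat \<Rightarrow> nat \<Rightarrow> real^'d::finite"
    and la lb r c R :: real
    and \<Theta> :: "('k::finite,'p,'d) param set"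
    and Y :: "(real^'d) set"
    and a :: "real^'d"
    and \<theta>t :: "nat \<Rightarrow> ('k,'p,'d) param"
  assumes "T \<ge> 1" and "\<forall>t<T. n t \<ge> 1"
    and "la \<ge> 0" and "lb \<ge> 0" and "r > 0"
    and "compact \<Theta>" and "c > 0"
    and "\<forall>\<theta>\<in>\<Theta>. \<forall>k. pos_def_matrix (Sig \<theta> $ k) \<and> lambda_min (Sig \<theta> $ k) \<ge> c"
    and "compact Y" and "0 < R"
    and "\<forall>t<T. \<forall>i<n t. y t i \<in> Y"
    and "\<forall>u\<in>Y. \<forall>v\<in>Y. linf_norm (u - v) \<le> R"
    and "Y \<subseteq> {x. \<forall>i. a $ i \<le> x $ i \<and> x $ i \<le> a $ i + R}"
    and "\<forall>D\<ge>1. \<theta>t D \<in> argmin_on \<Theta>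
           (\<lambda>\<theta>. ereal (- binned_log_lik a R D T n X y \<theta> / real (\<Sum>t<T. n t))
                 + penalty la lb r T X \<theta>)"
  shows "\<exists>s L. strict_mono s \<and> (\<theta>t \<circ> s) \<longlonglongrightarrow> L \<and>
           L \<in> argmin_on \<Theta>
             (\<lambda>\<theta>. ereal (- log_lik T n X y \<theta> / real (\<Sum>t<T. n t)) + penalty la lb r T X \<theta>)"
proof -
  note A = assms
  define N where "N = real (\<Sum>t<T. n t)"
  have "n 0 \<le> (\<Sum>t<T. n t)" by (rule member_le_sum) (use A(1) in auto)
  then have Nne: "N \<noteq> 0" using A(1,2) unfolding N_def by fastforce
  have detne: "\<forall>\<theta>\<in>\<Theta>. \<forall>k. det (Sig \<theta> $ k) \<noteq> 0" using A(8) pd_det by blast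
  have inTh: "\<theta>t D \<in> \<Theta>" if "D \<ge> 1" for D using A(14) that unfolding argmin_on_def by blast
  have "seq_compact \<Theta>" using A(6) compact_imp_seq_compact by blast
  then obtain L r0 where L: "L \<in> \<Theta>" "strict_mono r0" "((\<lambda>j. \<theta>t (Suc j)) \<circ> r0) \<longlonglongrightarrow> L"
    unfolding seq_compact_def using inTh by (metis Suc_eq_plus1 le_add2)
  define s where "s = (\<lambda>j. Suc (r0 j))"
  have smono: "strict_mono s" using L(2) unfolding s_def strict_mono_def by simp
  have slim: "(\<theta>t \<circ> s) \<longlonglongrightarrow> L" using L(3) unfolding s_def by (simp add: o_def)
  have s1: "s j \<ge> 1" for j unfolding s_def by simp
  have yQ: "\<forall>i. a $ i \<le> y t ii $ i \<and> y t ii $ i \<le> a $ i + R" if "t < T" "ii < n t" for t ii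
    using A(11,13) that by blast
  have clim: "((\<lambda>D. bin_center a R D (bin_of a R D (y t ii))) \<circ> s) \<longlonglongrightarrow> y t ii"
    if "t < T" "ii < n t" for t ii
    by (rule LIMSEQ_subseq_LIMSEQ[OF center_lim[OF A(10) yQ[OF that]] smono])
  have blim: "(\<lambda>j. binned_log_lik a R (s j) T n X y (f j)) \<longlonglongrightarrow> log_lik T n X y L'"
    if f: "f \<longlonglongrightarrow> L'" "\<forall>j. f j \<in> \<Theta>" "L' \<in> \<Theta>" for f L'
  proof -
    have "(\<lambda>j. \<Sum>t<T. \<Sum>i<n t. ln (mix_density (f j) (X t) (bin_center a R (s j) (bin_of a R (s j) (y t i)))))
          \<longlonglongrightarrow> log_lik T n X y L'"
      unfolding log_lik_def
    proof (intro tendsto_sum)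
      fix t i assume ti: "t \<in> {..<T}" "i \<in> {..<n t}"
      show "(\<lambda>j. ln (mix_density (f j) (X t) (bin_center a R (s j) (bin_of a R (s j) (y t i)))))
          \<longlonglongrightarrow> ln (mix_density L' (X t) (y t i))"
        using G_tendsto[OF f(1) clim[of t i, unfolded o_def]] detne f(2,3) ti by auto
    qed
    then show ?thesis by (subst binned_alt[OF s1]) simp
  qed
  have "L \<in> argmin_on \<Theta>
             (\<lambda>\<theta>. ereal (- log_lik T n X y \<theta> / real (\<Sum>t<T. n t)) + penalty la lb r T X \<theta>)"
    unfolding argmin_on_def
  proof (intro CollectI conjI ballI L(1))
    fix \<theta>' assume th': "\<theta>' \<in> \<Theta>"
    show "ereal (- log_lik T n X y L / real (\<Sum>t<T. n t)) + penalty la lb r T X L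
        \<le> ereal (- log_lik T n X y \<theta>' / real (\<Sum>t<T. n t)) + penalty la lb r T X \<theta>'"
    proof (cases "okp r T X \<theta>'")
      case False
      then show ?thesis by (simp add: pen_eq)
    next
      case ok': True
      have step: "okp r T X (\<theta>t (s j)) \<and>
         - binned_log_lik a R (s j) T n X y (\<theta>t (s j)) / N + Pf la lb (\<theta>t (s j))
         \<le> - binned_log_lik a R (s j) T n X y \<theta>' / N + Pf la lb \<theta>'" for j
      proof -
        have "ereal (- binned_log_lik a R (s j) T n X y (\<theta>t (s j)) / N) + penalty la lb r T X (\<theta>t (s j))
            \<le> ereal (- binned_log_lik a R (s j) T n X y \<theta>' / N) + penalty la lb r T X \<theta>'"
          using A(14) s1[of j] th' unfolding argmin_on_def N_def by blast
        then show ?thesis using ok' by (cases "okp r T X (\<theta>t (s j))") (auto simp: pen_eq)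
      qed
      have okL: "okp r T X L"
        unfolding okp_def
      proof (intro allI impI)
        fix k t assume "t < T"
        have "((\<lambda>j. norm (X t v* (beta ((\<theta>t \<circ> s) j) $ k)))) \<longlonglongrightarrow> norm (X t v* (beta L $ k))"
          by (rule tendsto_bnorm[OF slim])
        moreover have "\<forall>j. norm (X t v* (beta ((\<theta>t \<circ> s) j) $ k)) \<le> r"
          using step \<open>t < T\<close> unfolding okp_def by auto
        ultimately show "norm (X t v* (beta L $ k)) \<le> r"
          by (intro tendsto_upperbound) (auto intro: always_eventually)
      qed
      have l1: "(\<lambda>j. - binned_log_lik a R (s j) T n X y (\<theta>t (s j)) / N + Pf la lb (\<theta>t (s j)))
           \<longlonglongrightarrow> - log_lik T n X y L / N + Pf la lb L"
        using blim[OF slim[unfolded o_def]] inTh s1 L(1) Nne tendsto_Pf[OF slim[unfolded o_def]]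
        by (intro tendsto_intros) auto
      have l2: "(\<lambda>j. - binned_log_lik a R (s j) T n X y \<theta>' / N + Pf la lb \<theta>')
           \<longlonglongrightarrow> - log_lik T n X y \<theta>' / N + Pf la lb \<theta>'"
        using blim[of "\<lambda>_. \<theta>'" \<theta>'] th' Nne by (intro tendsto_intros) auto
      have "- log_lik T n X y L / N + Pf la lb L \<le> - log_lik T n X y \<theta>' / N + Pf la lb \<theta>'"
        by (rule tendsto_le[OF _ l2 l1]) (use step in auto)
      then show ?thesis using okL ok' by (simp add: pen_eq N_def)
    qed
  qed
  then show ?thesis using smono slim by blast
qed

end
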